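(* Let $k>1$ be an odd integer and let $n_k=\lceil \log_2 k\rceil$. Then for every integer $x\in\{0,1,\ldots,k-1\}$ there exist $n_k$ pairwise distinct integers $i_1,\ldots,i_{n_k}\in\{0,1,\ldots,n_k+k-2\}$ such that $$x\equiv 2^{i_1}+2^{i_2}+\cdots+2^{i_{n_k}}\pmod k.$$ In other words, $x$ is congruent modulo $k$ to a sum of exactly $n_k$ distinct elements of $D=\{2^i: i=0,1,\ldots,n_k+k-2\}$.
   Context: $n_k=\lceil\log_2 k\rceil$ is the smallest integer $n$ with $k\le 2^{n}$. *)

theory Defs
  imports Main "HOL-Number_Theory.Cong"
begin

(* n_k = ceil(log2 k): the smallest natural n with k <= 2^n *)
definition nk :: "nat \<Rightarrow> nat" where
  "nk k = (LEAST n. k \<le> 2 ^ n)"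

end

theory Submission
  imports Defs "HOL-Number_Theory.Number_Theory"
begin

definition val :: "nat set \<Rightarrow> nat set \<Rightarrow> int" where
  "val A B = (\<Sum>i\<in>A. (2::int)^i) - (\<Sum>i\<in>B. (2::int)^i)"

definition good :: "nat \<Rightarrow> nat set \<Rightarrow> nat set \<Rightarrow> bool" where
  "good n A B \<longleftrightarrow> A \<subseteq> {..<n} \<and> B \<subseteq> {..<n} \<and> A \<inter> B = {}"

lemma sum_shift: "(\<Sum>i\<in>Suc ` A. (2::int)^i) = 2 * (\<Sum>i\<in>A. (2::int)^i)"
  by (simp add: sum.reindex sum_distrib_left)

lemma val_shift: "val (Suc ` A) (Suc ` B) = 2 * val A B"
  by (simp add: val_def sum_shift algebra_simps)

lemma sum_ins0: "finite A \<Longrightarrow> (\<Sum>i\<in>insert 0 (Suc ` A). (2::int)^i) = 1 + 2 * (\<Sum>i\<in>A. (2::int)^i)"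
  by (subst sum.insert) (auto simp: sum_shift)

lemma good_fin: "good n A B \<Longrightarrow> finite A \<and> finite B"
  unfolding good_def using finite_subset by blast

lemma good_shift: "good n A B \<Longrightarrow> good (Suc n) (Suc ` A) (Suc ` B)"
  unfolding good_def by auto

lemma good_insA: "good n A B \<Longrightarrow> good (Suc n) (insert 0 (Suc ` A)) (Suc ` B)"
  unfolding good_def by auto

lemma good_insB: "good n A B \<Longrightarrow> good (Suc n) (Suc ` A) (insert 0 (Suc ` B))"
  unfolding good_def by auto

lemma good_swap: "good n A B \<Longrightarrow> good n B A"
  unfolding good_def by auto

lemma card_ins0: "finite A \<Longrightarrow> card (insert 0 (Suc ` A)) = Suc (card A)"
  by (subst card_insert_disjoint) (auto simp: card_image)

lemma rep:
  "(\<forall>t::int. \<bar>t\<bar> \<le> 2^m - 1 \<longrightarrow> (\<exists>A B. good (Suc m) A B \<and> card A = card B \<and> val A B = t)) \<and>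
   (\<forall>t::int. 1 \<le> t \<and> t \<le> 2^m \<longrightarrow> (\<exists>A B. good (Suc m) A B \<and> card A = card B + 1 \<and> val A B = t))"
proof (induction m)
  case 0
  show ?case
  proof (intro conjI allI impI)
    fix t :: int assume "\<bar>t\<bar> \<le> 2^0 - 1"
    then have "t = 0" by simp
    then show "\<exists>A B. good (Suc 0) A B \<and> card A = card B \<and> val A B = t"
      by (intro exI[of _ "{}"]) (auto simp: good_def val_def)
  next
    fix t :: int assume "1 \<le> t \<and> t \<le> 2^0"
    then have "t = 1" by simp
    then show "\<exists>A B. good (Suc 0) A B \<and> card A = card B + 1 \<and> val A B = t"
      by (intro exI[of _ "{0}"] exI[of _ "{}"]) (auto simp: good_def val_def)
  qed
next
  case (Suc m)
  note IH1 = Suc[THEN conjunct1, rule_format] and IH2 = Suc[THEN conjunct2, rule_format]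
  show ?case
  proof (intro conjI allI impI)
    fix t :: int assume t: "\<bar>t\<bar> \<le> 2^Suc m - 1"
    show "\<exists>A B. good (Suc (Suc m)) A B \<and> card A = card B \<and> val A B = t"
    proof (cases "even t")
      case True
      then obtain u where u: "t = 2*u" by auto
      have "\<bar>u\<bar> \<le> 2^m - 1" using t u by simp
      then obtain A B where AB: "good (Suc m) A B" "card A = card B" "val A B = u"
        using IH1 by blast
      show ?thesis
        by (intro exI[of _ "Suc ` A"] exI[of _ "Suc ` B"])
          (simp add: good_shift AB val_shift u card_image)
    next
      case False
      show ?thesis
      proof (cases "t > 0")
        case True
        define u where "u = (t+1) div 2"
        have tu: "t = 2*u - 1" using False u_def by presburger
        have "1 \<le> u \<and> u \<le> 2^m" using t tu True by simp
        then obtain A B where AB: "good (Suc m) A B" "card A = card B + 1" "val A B = u"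
          using IH2 by blast
        have f: "finite A" "finite B" using good_fin AB(1) by auto
        show ?thesis
          by (intro exI[of _ "Suc ` A"] exI[of _ "insert 0 (Suc ` B)"])
            (simp add: good_insB AB card_image card_ins0 f val_def sum_shift sum_ins0 tu
               flip: AB(3))
      next
        case nt: False
        define u where "u = (1 - t) div 2"
        have tu: "t = 1 - 2*u" using False u_def by presburger
        have "1 \<le> u \<and> u \<le> 2^m" using t tu nt by simp
        then obtain A B where AB: "good (Suc m) A B" "card A = card B + 1" "val A B = u"
          using IH2 by blast
        have f: "finite A" "finite B" using good_fin AB(1) by auto
        show ?thesis
          by (intro exI[of _ "insert 0 (Suc ` B)"] exI[of _ "Suc ` A"])
            (simp add: good_insA good_swap AB card_image card_ins0 f val_def sum_shift sum_ins0 tu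
               flip: AB(3))
      qed
    qed
  next
    fix t :: int assume t: "1 \<le> t \<and> t \<le> 2^Suc m"
    show "\<exists>A B. good (Suc (Suc m)) A B \<and> card A = card B + 1 \<and> val A B = t"
    proof (cases "even t")
      case True
      then obtain u where u: "t = 2*u" by auto
      have "1 \<le> u \<and> u \<le> 2^m" using t u by simp
      then obtain A B where AB: "good (Suc m) A B" "card A = card B + 1" "val A B = u"
        using IH2 by blast
      show ?thesis
        by (intro exI[of _ "Suc ` A"] exI[of _ "Suc ` B"])
          (simp add: good_shift AB val_shift u card_image)
    next
      case False
      define u where "u = (t - 1) div 2"
      have tu: "t = 2*u + 1" using False u_def by presburger
      have "t \<noteq> 2^Suc m" using False by auto
      then have "\<bar>u\<bar> \<le> 2^m - 1" using t tu by simp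
      then obtain A B where AB: "good (Suc m) A B" "card A = card B" "val A B = u"
        using IH1 by blast
      have f: "finite A" "finite B" using good_fin AB(1) by auto
      show ?thesis
        by (intro exI[of _ "insert 0 (Suc ` A)"] exI[of _ "Suc ` B"])
          (simp add: good_insA AB card_image card_ins0 f val_def sum_shift sum_ins0 tu
             flip: AB(3))
    qed
  qed
qed


lemma sum_pow2: "(\<Sum>i<n. (2::int)^i) = 2^n - 1"
  by (induction n) auto

theorem mainTheorem1:
  fixes k :: nat and x :: nat
  assumes "k > 1" and "odd k" and "x < k"
  shows "\<exists>I :: nat set. I \<subseteq> {0..nk k + k - 2} \<and> card I = nk k \<and>
           [x = (\<Sum>i\<in>I. 2 ^ i)] (mod k)"
proof -
  define n where "n = nk k"
  have ex: "\<exists>n. k \<le> 2^n" using less_exp[of k] by (intro exI[of _ k]) simp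
  have kle: "k \<le> 2^n" unfolding n_def nk_def by (rule LeastI_ex[OF ex])
  have n0: "n \<noteq> 0" using kle assms(1) by (cases n) auto
  then obtain m where m: "n = Suc m" by (cases n) auto
  have "\<not> k \<le> 2^m" unfolding n_def nk_def
    by (rule not_less_Least) (use m n_def nk_def in simp)
  then have km: "2^m < k" by simp
  have kl: "k < 2^n"
  proof -
    have "even ((2::nat)^n)" using n0 by simp
    then have "k \<noteq> 2^n" using assms(2) by auto
    then show ?thesis using kle by simp
  qed
  define r where "r = totient k"
  have rk: "r < k" using totient_less assms(1) r_def by blast
  have cop: "coprime 2 k" using assms(2) by simp
  have r1: "[2^r = 1] (mod k)" using euler_theorem[OF cop] r_def by simp
  have r0: "r > 0" using assms(1) r_def by simp
  have "k dvd 2^r - 1" using r1 by (simp add: cong_altdef_nat one_le_power)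
  moreover have "2^r - 1 > (0::nat)" using r0 one_less_power[of "2::nat" r] by simp
  ultimately have "k \<le> 2^r - 1" by (simp add: dvd_imp_le)
  then have "(2::nat)^m < 2^r" using km by linarith
  then have mr: "m < r" using power_less_imp_less_exp[of "2::nat" m r] by simp
  define K where "K = int k"
  have K0: "K > 0" using assms(1) K_def by simp
  define y where "y = 2^m + (int x - 2^m) mod K"
  have ycong: "[y = int x] (mod K)" unfolding y_def cong_def
    by (simp add: mod_add_right_eq)
  have "(int x - 2^m) mod K < K" using K0 by simp
  then have y1: "y \<le> 2^m + K - 1" using y_def by simp
  have y0: "y \<ge> 2^m" using K0 y_def by simp
  define t where "t = y - (2^Suc m - 1)"
  have Kle: "K \<le> 2^Suc m - 1" proof -
    have "int k < int (2^Suc m)" using kl m by (simp only: of_nat_less_iff)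
    then have "K < 2^Suc m" using K_def by (simp only: of_nat_power of_nat_numeral)
    then show ?thesis by linarith
  qed
  have "\<bar>t\<bar> \<le> 2^m - 1" using y0 y1 Kle unfolding t_def power_Suc by linarith
  then obtain A B where AB: "good (Suc m) A B" "card A = card B" "val A B = t"
    using rep[of m] by blast
  have AS: "A \<subseteq> {..<Suc m}" and BS: "B \<subseteq> {..<Suc m}" and ABd: "A \<inter> B = {}"
    using AB(1) good_def by auto
  have fA: "finite A" and fB: "finite B" using AS BS finite_subset by auto
  define I where "I = ({..<Suc m} - B) \<union> ((+) r ` A)"
  have disj: "({..<Suc m} - B) \<inter> ((+) r ` A) = {}" using mr by auto
  have sub: "I \<subseteq> {0..n + k - 2}"
  proof
    fix i assume "i \<in> I"
    then consider "i < Suc m" | j where "j \<in> A" "i = r + j" unfolding I_def by auto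
    then show "i \<in> {0..n + k - 2}"
    proof cases
      case 1 then show ?thesis using m assms(1) by simp
    next
      case 2 then have "j < Suc m" using AS by auto
      then show ?thesis using 2 rk m by simp
    qed
  qed
  have cardI: "card I = n"
  proof -
    have "card ({..<Suc m} - B) = Suc m - card B" using BS by (simp add: card_Diff_subset fB)
    moreover have "card ((+) r ` A) = card A" by (simp add: card_image)
    moreover have "card B \<le> Suc m" using card_mono[OF finite_lessThan BS] by simp
    ultimately show ?thesis unfolding I_def using disj AB(2) m
      by (simp add: card_Un_disjoint fA)
  qed
  have sI: "(\<Sum>i\<in>I. (2::int)^i) = (2^Suc m - 1) - (\<Sum>i\<in>B. (2::int)^i) + 2^r * (\<Sum>i\<in>A. (2::int)^i)"
  proof -
    have "(\<Sum>i\<in>I. (2::int)^i) = (\<Sum>i\<in>{..<Suc m} - B. (2::int)^i) + (\<Sum>i\<in>(+) r ` A. (2::int)^i)"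
      unfolding I_def by (rule sum.union_disjoint) (use disj fA in auto)
    also have "(\<Sum>i\<in>{..<Suc m} - B. (2::int)^i) = (\<Sum>i<Suc m. (2::int)^i) - (\<Sum>i\<in>B. (2::int)^i)"
      using BS by (simp add: sum_diff)
    also have "(\<Sum>i\<in>(+) r ` A. (2::int)^i) = 2^r * (\<Sum>i\<in>A. (2::int)^i)"
      by (simp add: sum.reindex sum_distrib_left power_add)
    finally show ?thesis by (simp add: sum_pow2)
  qed
  have "[int (2^r) = int 1] (mod int k)" using r1 by (simp only: cong_int_iff)
  then have r1i: "[2^r = (1::int)] (mod K)" unfolding K_def by simp
  have "[(2::int)^r * (\<Sum>i\<in>A. (2::int)^i) = 1 * (\<Sum>i\<in>A. (2::int)^i)] (mod K)"
    by (rule cong_scalar_right[OF r1i])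
  then have "[(\<Sum>i\<in>I. (2::int)^i) = (2^Suc m - 1) - (\<Sum>i\<in>B. (2::int)^i) + (\<Sum>i\<in>A. (2::int)^i)] (mod K)"
    unfolding sI using cong_add[OF cong_refl[of "(2^Suc m - 1) - (\<Sum>i\<in>B. (2::int)^i)"]] by simp
  also have "(2^Suc m - 1) - (\<Sum>i\<in>B. (2::int)^i) + (\<Sum>i\<in>A. (2::int)^i) = y"
  proof -
    have "val A B = (\<Sum>i\<in>A. (2::int)^i) - (\<Sum>i\<in>B. (2::int)^i)" by (simp only: val_def)
    then show ?thesis using AB(3) t_def by linarith
  qed
  finally have c1: "[(\<Sum>i\<in>I. (2::int)^i) = y] (mod K)" .
  have "[(\<Sum>i\<in>I. (2::int)^i) = int x] (mod K)" using cong_trans[OF c1 ycong] .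
  then have "[int x = (\<Sum>i\<in>I. (2::int)^i)] (mod K)" by (rule cong_sym)
  moreover have "int (\<Sum>i\<in>I. 2^i) = (\<Sum>i\<in>I. (2::int)^i)" by (simp only: of_nat_sum of_nat_power of_nat_numeral)
  ultimately have "[int x = int (\<Sum>i\<in>I. 2^i)] (mod int k)"
    unfolding K_def by (simp only:)
  then have "[x = (\<Sum>i\<in>I. 2^i)] (mod k)" by (simp only: cong_int_iff)
  then show ?thesis using sub cardI unfolding n_def by (intro exI[of _ I]) (simp only: conj_absorb simp_thms)
qed

end
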